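(* Let $G$ be a cubic graph of order $2n$ and let $\mathcal M=\{M_1,\ldots,M_t\}$ be a family of matchings of $G$ whose union is $E(G)$ and such that $\sum_{i=1}^t |M_i|=(n-1)t$. Then there exist $t$ matchings of $G$, each of size exactly $n-1$, whose union is $E(G)$.
   Context: All graphs are finite, simple, connected and cubic. *)

theory Defs
  imports Main
begin

definition simple_graph :: "'a set \<Rightarrow> 'a set set \<Rightarrow> bool" where
  "simple_graph V E \<longleftrightarrow> finite V \<and> (\<forall>e\<in>E. e \<subseteq> V \<and> card e = 2)"

definition degree :: "'a set set \<Rightarrow> 'a \<Rightarrow> nat" where
  "degree E v = card {e \<in> E. v \<in> e}"

definition cubic :: "'a set \<Rightarrow> 'a set set \<Rightarrow> bool" where
  "cubic V E \<longleftrightarrow> (\<forall>v\<in>V. degree E v = 3)"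

definition adj :: "'a set set \<Rightarrow> ('a \<times> 'a) set" where
  "adj E = {(u, v). {u, v} \<in> E}"

definition connected_graph :: "'a set \<Rightarrow> 'a set set \<Rightarrow> bool" where
  "connected_graph V E \<longleftrightarrow> V \<noteq> {} \<and> (\<forall>u\<in>V. \<forall>v\<in>V. (u, v) \<in> (adj E)\<^sup>*)"

definition cubic_graph :: "'a set \<Rightarrow> 'a set set \<Rightarrow> bool" where
  "cubic_graph V E \<longleftrightarrow> simple_graph V E \<and> connected_graph V E \<and> cubic V E"

definition matching :: "'a set set \<Rightarrow> 'a set set \<Rightarrow> bool" where
  "matching E M \<longleftrightarrow> M \<subseteq> E \<and> (\<forall>e1\<in>M. \<forall>e2\<in>M. e1 \<noteq> e2 \<longrightarrow> e1 \<inter> e2 = {})"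

end

theory Submission
  imports Defs
begin

definition pd :: "'a set set \<Rightarrow> bool" where
  "pd M \<longleftrightarrow> (\<forall>e1\<in>M. \<forall>e2\<in>M. e1 \<noteq> e2 \<longrightarrow> e1 \<inter> e2 = {})"

lemma card2_mem: "card e = 2 \<Longrightarrow> y \<in> e \<Longrightarrow> \<exists>x. e = {x,y} \<and> x \<noteq> y"
  by (auto simp: card_2_iff)

lemma pd_uncontract:
  assumes "pd P" "c \<in> P" "\<forall>e\<in>P. y \<notin> e \<and> z \<notin> e" "a1 = {x,y}" "a2 = {w,z}" "c = {x,w}" "a1 \<inter> a2 = {}"
  shows "pd (insert a1 (insert a2 (P - {c})))"
  unfolding pd_def
proof (intro ballI impI)
  fix e1 e2 assume e: "e1 \<in> insert a1 (insert a2 (P - {c}))" "e2 \<in> insert a1 (insert a2 (P - {c}))" "e1 \<noteq> e2"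
  have k: "\<And>e. e \<in> P - {c} \<Longrightarrow> e \<inter> a1 = {} \<and> a1 \<inter> e = {} \<and> e \<inter> a2 = {} \<and> a2 \<inter> e = {}"
  proof -
    fix e assume e: "e \<in> P - {c}"
    then have "e \<inter> c = {}" using assms(1,2) unfolding pd_def by blast
    then have "x \<notin> e \<and> w \<notin> e" using assms(6) by auto
    moreover have "y \<notin> e \<and> z \<notin> e" using assms(3) e by blast
    ultimately show "e \<inter> a1 = {} \<and> a1 \<inter> e = {} \<and> e \<inter> a2 = {} \<and> a2 \<inter> e = {}"
      using assms(4,5) by auto
  qed
  have d21: "a2 \<inter> a1 = {}" using assms(7) by blast
  from e(1) e(2) show "e1 \<inter> e2 = {}"
    apply (elim insertE)
    using e(3) k assms(7) d21 assms(1) unfolding pd_def by simp_all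
qed

lemma pd_insert_b:
  assumes "pd Q" "\<forall>e\<in>Q. y \<notin> e \<and> z \<notin> e" "b = {y,z}"
  shows "pd (insert b Q)"
  unfolding pd_def
proof (intro ballI impI)
  fix e1 e2 assume e: "e1 \<in> insert b Q" "e2 \<in> insert b Q" "e1 \<noteq> e2"
  have k: "\<And>e. e \<in> Q \<Longrightarrow> e \<inter> b = {} \<and> b \<inter> e = {}" using assms(2,3) by auto
  from e(1) e(2) show "e1 \<inter> e2 = {}"
    apply (elim insertE)
    using e(3) k assms(1) unfolding pd_def by simp_all
qed

lemma swap_disj:
  "finite A \<Longrightarrow> finite B \<Longrightarrow> A \<inter> B = {} \<Longrightarrow> pd A \<Longrightarrow> pd B \<Longrightarrow> \<forall>e\<in>A\<union>B. card e = 2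
   \<Longrightarrow> card B < card A \<Longrightarrow> \<exists>A' B'. pd A' \<and> pd B' \<and> A' \<union> B' = A \<union> B \<and>
        card A' = card A - 1 \<and> card B' = card B + 1"
proof (induction "card A + card B" arbitrary: A B rule: less_induct)
  case less
  note finA = less.prems(1) and finB = less.prems(2) and disj = less.prems(3)
    and pdA = less.prems(4) and pdB = less.prems(5) and c2 = less.prems(6) and lt = less.prems(7)
  show ?case
  proof (cases "\<exists>a\<in>A. \<forall>b\<in>B. a \<inter> b = {}")
    case True
    then obtain a where a: "a \<in> A" "\<forall>b\<in>B. a \<inter> b = {}" by blast
    have aB: "a \<notin> B" using a disj by blast
    have "pd (A - {a})" using pdA by (auto simp: pd_def)
    moreover have "pd (insert a B)" using pdB a by (auto simp: pd_def)
    moreover have "(A - {a}) \<union> insert a B = A \<union> B" using a by blast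
    moreover have "card (A - {a}) = card A - 1" using a finA by simp
    moreover have "card (insert a B) = card B + 1" using aB finB by simp
    ultimately show ?thesis by blast
  next
    case False
    then have "\<forall>a\<in>A. \<exists>b. b \<in> B \<and> a \<inter> b \<noteq> {}" by blast
    then have "\<exists>f. \<forall>a\<in>A. f a \<in> B \<and> a \<inter> f a \<noteq> {}" by (rule bchoice)
    then obtain f where f: "\<forall>a\<in>A. f a \<in> B \<and> a \<inter> f a \<noteq> {}" by blast
    have "\<not> inj_on f A"
    proof
      assume "inj_on f A"
      moreover have "f ` A \<subseteq> B" using f by blast
      ultimately have "card A \<le> card B" using finB card_inj_on_le by blast
      then show False using lt by simp
    qed
    then obtain a1 a2 where a12: "a1 \<in> A" "a2 \<in> A" "a1 \<noteq> a2" "f a1 = f a2"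
      unfolding inj_on_def by blast
    define b where "b = f a1"
    have bB: "b \<in> B" and m1: "a1 \<inter> b \<noteq> {}" and m2: "a2 \<inter> b \<noteq> {}"
      using f a12 b_def by auto
    have d12: "a1 \<inter> a2 = {}" using pdA a12 by (auto simp: pd_def)
    obtain y z where yz: "b = {y,z}" "y \<noteq> z" "y \<in> a1" "z \<in> a2"
    proof -
      have "card b = 2" using c2 bB by blast
      then obtain u v where uv: "b = {u,v}" "u \<noteq> v" by (auto simp: card_2_iff)
      show ?thesis
      proof (cases "u \<in> a1")
        case True
        then have "v \<in> a2" using m2 d12 uv by blast
        then show ?thesis using that[of u v] uv True by blast
      next
        case False
        then have "v \<in> a1" "u \<in> a2" using m1 m2 d12 uv by blast+
        then show ?thesis using that[of v u] uv by blast
      qed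
    qed
    obtain x where x: "a1 = {x,y}" "x \<noteq> y" using card2_mem[of a1 y] c2 a12 yz by blast
    obtain w where w: "a2 = {w,z}" "w \<noteq> z" using card2_mem[of a2 z] c2 a12 yz by blast
    have neq: "x \<noteq> z" "x \<noteq> w" "y \<noteq> w" using d12 x w by auto
    have avA1: "\<And>e. e \<in> A \<Longrightarrow> e \<noteq> a1 \<Longrightarrow> x \<notin> e \<and> y \<notin> e"
    proof -
      fix e assume e: "e \<in> A" "e \<noteq> a1"
      have "e \<inter> a1 = {}" using pdA e a12(1) unfolding pd_def by blast
      then show "x \<notin> e \<and> y \<notin> e" using x by auto
    qed
    have avA2: "\<And>e. e \<in> A \<Longrightarrow> e \<noteq> a2 \<Longrightarrow> w \<notin> e \<and> z \<notin> e"
    proof -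
      fix e assume e: "e \<in> A" "e \<noteq> a2"
      have "e \<inter> a2 = {}" using pdA e a12(2) unfolding pd_def by blast
      then show "w \<notin> e \<and> z \<notin> e" using w by auto
    qed
    have avB: "\<And>e. e \<in> B \<Longrightarrow> e \<noteq> b \<Longrightarrow> y \<notin> e \<and> z \<notin> e"
    proof -
      fix e assume e: "e \<in> B" "e \<noteq> b"
      have "e \<inter> b = {}" using pdB e bB unfolding pd_def by blast
      then show "y \<notin> e \<and> z \<notin> e" using yz by auto
    qed
    define c where "c = {x,w}"
    have a1B: "a1 \<notin> B" "a2 \<notin> B" using disj a12 by auto
    have bA: "b \<notin> A" using disj bB by auto
    have bc: "b \<noteq> c" using yz neq x unfolding c_def by auto
    have ca1: "c \<noteq> a1" "c \<noteq> a2" using x w neq yz unfolding c_def by auto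
    have cA: "c \<notin> A" using avA1[of c] ca1 unfolding c_def by auto
    have cardA2: "card A \<ge> 2"
    proof -
      have "{a1,a2} \<subseteq> A" using a12 by auto
      then have "card {a1,a2} \<le> card A" using finA card_mono by blast
      then show ?thesis using a12 by simp
    qed
    have cardB1: "card B \<ge> 1" proof -
      have "card B > 0" using bB finB card_gt_0_iff by blast
      then show ?thesis by simp
    qed
    show ?thesis
    proof (cases "c \<in> B")
      case True
      define A1 where "A1 = A - {a1,a2}"
      define B1 where "B1 = B - {b,c}"
      have cB2: "card B \<ge> 2"
      proof -
        have "{b,c} \<subseteq> B" using True bB by auto
        then have "card {b,c} \<le> card B" using finB card_mono by blast
        then show ?thesis using bc by simp
      qed
      have cA1: "card A1 = card A - 2" using a12 finA unfolding A1_def by (simp add: card_Diff_subset)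
      have cB1: "card B1 = card B - 2" using True bB bc finB unfolding B1_def by (simp add: card_Diff_subset)
      have lt1: "card B1 < card A1" using cA1 cB1 lt cardA2 cB2 by linarith
      have pdA1: "pd A1" using pdA unfolding A1_def pd_def by blast
      have pdB1: "pd B1" using pdB unfolding B1_def pd_def by blast
      have "\<exists>A' B'. pd A' \<and> pd B' \<and> A' \<union> B' = A1 \<union> B1 \<and> card A' = card A1 - 1 \<and> card B' = card B1 + 1"
      proof (rule less.hyps)
        show "card A1 + card B1 < card A + card B" using cA1 cB1 cardA2 cB2 by linarith
        show "finite A1" "finite B1" using finA finB unfolding A1_def B1_def by auto
        show "A1 \<inter> B1 = {}" using disj unfolding A1_def B1_def by blast
        show "pd A1" "pd B1" by fact+
        show "\<forall>e\<in>A1 \<union> B1. card e = 2" using c2 unfolding A1_def B1_def by blast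
        show "card B1 < card A1" by fact
      qed
      then obtain A1' B1' where h: "pd A1'" "pd B1'" "A1' \<union> B1' = A1 \<union> B1"
        "card A1' = card A1 - 1" "card B1' = card B1 + 1" by blast
      have av: "\<And>e. e \<in> A1 \<union> B1 \<Longrightarrow> x \<notin> e \<and> y \<notin> e \<and> z \<notin> e \<and> w \<notin> e"
      proof -
        fix e assume "e \<in> A1 \<union> B1"
        then show "x \<notin> e \<and> y \<notin> e \<and> z \<notin> e \<and> w \<notin> e"
        proof
          assume "e \<in> A1" then show ?thesis using avA1 avA2 unfolding A1_def by blast
        next
          assume e: "e \<in> B1"
          then have "e \<inter> c = {}" using pdB True unfolding B1_def pd_def by blast
          then show ?thesis using avB e unfolding B1_def c_def by blast
        qed
      qed
      have finA1': "finite A1'" "finite B1'"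
      proof -
        have "finite (A1 \<union> B1)" using finA finB unfolding A1_def B1_def by auto
        then show "finite A1'" "finite B1'" using h(3) by (metis finite_Un)+
      qed
      have n1: "a1 \<notin> A1'" "a2 \<notin> A1'" "b \<notin> B1'" "c \<notin> B1'"
      proof -
        have "a1 \<notin> A1 \<union> B1" "a2 \<notin> A1 \<union> B1" "b \<notin> A1 \<union> B1" "c \<notin> A1 \<union> B1"
          using a1B bA cA unfolding A1_def B1_def by auto
        then show "a1 \<notin> A1'" "a2 \<notin> A1'" "b \<notin> B1'" "c \<notin> B1'" using h(3) by blast+
      qed
      define A' where "A' = insert a1 (insert a2 A1')"
      define B' where "B' = insert b (insert c B1')"
      have "pd A'" unfolding A'_def pd_def
      proof (intro ballI impI)
        fix e1 e2 assume e: "e1 \<in> insert a1 (insert a2 A1')" "e2 \<in> insert a1 (insert a2 A1')" "e1 \<noteq> e2"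
        have k: "\<And>e. e \<in> A1' \<Longrightarrow> e \<inter> a1 = {} \<and> a1 \<inter> e = {} \<and> e \<inter> a2 = {} \<and> a2 \<inter> e = {}"
        proof -
          fix e assume "e \<in> A1'"
          then have "e \<in> A1 \<union> B1" using h(3) by blast
          then have "x \<notin> e \<and> y \<notin> e \<and> z \<notin> e \<and> w \<notin> e" by (rule av)
          then show "e \<inter> a1 = {} \<and> a1 \<inter> e = {} \<and> e \<inter> a2 = {} \<and> a2 \<inter> e = {}" using x w by auto
        qed
        have d21: "a2 \<inter> a1 = {}" using d12 by blast
        from e(1) e(2) show "e1 \<inter> e2 = {}"
          apply (elim insertE)
          using e(3) k d12 d21 h(1) unfolding pd_def by simp_all
      qed
      moreover have "pd B'" unfolding B'_def pd_def
      proof (intro ballI impI)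
        fix e1 e2 assume e: "e1 \<in> insert b (insert c B1')" "e2 \<in> insert b (insert c B1')" "e1 \<noteq> e2"
        have k: "\<And>e. e \<in> B1' \<Longrightarrow> e \<inter> b = {} \<and> b \<inter> e = {} \<and> e \<inter> c = {} \<and> c \<inter> e = {}"
        proof -
          fix e assume "e \<in> B1'"
          then have "e \<in> A1 \<union> B1" using h(3) by blast
          then have "x \<notin> e \<and> y \<notin> e \<and> z \<notin> e \<and> w \<notin> e" by (rule av)
          then show "e \<inter> b = {} \<and> b \<inter> e = {} \<and> e \<inter> c = {} \<and> c \<inter> e = {}" using yz unfolding c_def by auto
        qed
        have bc0: "b \<inter> c = {}" "c \<inter> b = {}" using yz neq x w unfolding c_def by auto
        from e(1) e(2) show "e1 \<inter> e2 = {}"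
          apply (elim insertE)
          using e(3) k bc0 h(2) unfolding pd_def by simp_all
      qed
      moreover have "A' \<union> B' = A \<union> B"
      proof -
        have "A' \<union> B' = (A1' \<union> B1') \<union> {a1,a2,b,c}" unfolding A'_def B'_def by auto
        also have "\<dots> = A1 \<union> B1 \<union> {a1,a2,b,c}" using h(3) by simp
        also have "\<dots> = A \<union> B" using a12 bB True unfolding A1_def B1_def by auto
        finally show ?thesis .
      qed
      moreover have "card A' = card A - 1" using n1 finA1' a12 h(4) cA1 lt1 unfolding A'_def by simp
      moreover have "card B' = card B + 1" using n1 finA1' bc h(5) cB1 cB2 unfolding B'_def by simp
      ultimately show ?thesis by blast
    next
      case False
      note cB = False
      define A0 where "A0 = insert c (A - {a1,a2})"
      define B0 where "B0 = B - {b}"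
      have cA0: "card A0 = card A - 1"
      proof -
        have "card (A - {a1,a2}) = card A - 2" using a12 finA by (simp add: card_Diff_subset)
        moreover have "c \<notin> A - {a1,a2}" using cA by blast
        ultimately show ?thesis using finA cardA2 unfolding A0_def by simp
      qed
      have cB0: "card B0 = card B - 1" using bB finB unfolding B0_def by simp
      have lt0: "card B0 < card A0" using cA0 cB0 lt cardA2 cardB1 by linarith
      have pdA0: "pd A0" unfolding A0_def pd_def
      proof (intro ballI impI)
        fix e1 e2 assume e: "e1 \<in> insert c (A - {a1,a2})" "e2 \<in> insert c (A - {a1,a2})" "e1 \<noteq> e2"
        have k: "\<And>e. e \<in> A - {a1,a2} \<Longrightarrow> e \<inter> c = {} \<and> c \<inter> e = {}"
        proof -
          fix e assume "e \<in> A - {a1,a2}"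
          then have "x \<notin> e \<and> w \<notin> e" using avA1 avA2 by blast
          then show "e \<inter> c = {} \<and> c \<inter> e = {}" unfolding c_def by auto
        qed
        from e(1) e(2) show "e1 \<inter> e2 = {}"
          apply (elim insertE)
          using e(3) k pdA unfolding pd_def by simp_all
      qed
      have pdB0: "pd B0" using pdB unfolding B0_def pd_def by blast
      have "\<exists>A' B'. pd A' \<and> pd B' \<and> A' \<union> B' = A0 \<union> B0 \<and> card A' = card A0 - 1 \<and> card B' = card B0 + 1"
      proof (rule less.hyps)
        show "card A0 + card B0 < card A + card B" using cA0 cB0 cardA2 cardB1 by linarith
        show "finite A0" "finite B0" using finA finB unfolding A0_def B0_def by auto
        show "A0 \<inter> B0 = {}" using disj cB unfolding A0_def B0_def by blast
        show "pd A0" "pd B0" by fact+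
        have "card c = 2" using neq unfolding c_def by simp
        then show "\<forall>e\<in>A0 \<union> B0. card e = 2" using c2 unfolding A0_def B0_def by blast
        show "card B0 < card A0" by fact
      qed
      then obtain A0' B0' where h: "pd A0'" "pd B0'" "A0' \<union> B0' = A0 \<union> B0"
        "card A0' = card A0 - 1" "card B0' = card B0 + 1" by blast
      have finAB0: "finite (A0 \<union> B0)" using finA finB unfolding A0_def B0_def by auto
      have fin': "finite A0'" "finite B0'" using h(3) finAB0 by (metis finite_Un)+
      have dis0: "A0' \<inter> B0' = {}"
      proof -
        have "card (A0 \<union> B0) = card A0 + card B0"
          using card_Un_disjoint[of A0 B0] finA finB disj cB unfolding A0_def B0_def by auto
        moreover have "card (A0' \<union> B0') + card (A0' \<inter> B0') = card A0' + card B0'"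
          using card_Un_Int[OF fin'] by simp
        ultimately have "card (A0' \<inter> B0') = 0" using h(3,4,5) lt0 by simp
        then show ?thesis using fin' by simp
      qed
      have av: "\<And>e. e \<in> A0 \<union> B0 \<Longrightarrow> y \<notin> e \<and> z \<notin> e"
      proof -
        fix e assume "e \<in> A0 \<union> B0"
        then show "y \<notin> e \<and> z \<notin> e"
          using avA1 avA2 avB yz neq x w unfolding A0_def B0_def c_def by blast
      qed
      have notin: "a1 \<notin> A0 \<union> B0" "a2 \<notin> A0 \<union> B0" "b \<notin> A0 \<union> B0"
        using a1B bA ca1 bc unfolding A0_def B0_def by auto
      have cin: "c \<in> A0' \<union> B0'" using h(3) unfolding A0_def by blast
      have av': "\<forall>e\<in>A0'. y \<notin> e \<and> z \<notin> e" "\<forall>e\<in>B0'. y \<notin> e \<and> z \<notin> e"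
        using av h(3) by blast+
      have nin': "a1 \<notin> A0'" "a2 \<notin> A0'" "b \<notin> A0'" "a1 \<notin> B0'" "a2 \<notin> B0'" "b \<notin> B0'"
        using notin h(3) by blast+
      have a12ne: "a1 \<noteq> a2" by fact
      have U2: "A \<union> B = (A0 \<union> B0 - {c}) \<union> {a1,a2,b}"
        using a12(1,2) bB cA cB unfolding A0_def B0_def by blast
      show ?thesis
      proof (cases "c \<in> A0'")
        case True
        have cnB: "c \<notin> B0'" using True dis0 by blast
        define A' where "A' = insert a1 (insert a2 (A0' - {c}))"
        define B' where "B' = insert b B0'"
        have "pd A'" unfolding A'_def
          by (rule pd_uncontract[OF h(1) True av'(1) x(1) w(1) c_def d12])
        moreover have "pd B'" unfolding B'_def by (rule pd_insert_b[OF h(2) av'(2) yz(1)])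
        moreover have "A' \<union> B' = A \<union> B" unfolding A'_def B'_def U2 h(3)[symmetric] using cnB by auto
        moreover have "card A' = card A - 1"
        proof -
          have "card (A0' - {c}) = card A0' - 1" using True fin' by simp
          moreover have "card A0' \<ge> 1" using True fin' by (metis One_nat_def Suc_leI card_gt_0_iff empty_iff)
          ultimately show ?thesis using nin' a12ne fin' h(4) cA0 unfolding A'_def by simp
        qed
        moreover have "card B' = card B + 1" using nin' fin' h(5) cB0 cardB1 unfolding B'_def by simp
        ultimately show ?thesis by blast
      next
        case False
        have cnB: "c \<in> B0'" using False cin by blast
        define A' where "A' = insert b A0'"
        define B' where "B' = insert a1 (insert a2 (B0' - {c}))"
        have "pd B'" unfolding B'_def
          by (rule pd_uncontract[OF h(2) cnB av'(2) x(1) w(1) c_def d12])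
        moreover have "pd A'" unfolding A'_def by (rule pd_insert_b[OF h(1) av'(1) yz(1)])
        moreover have "A' \<union> B' = A \<union> B" unfolding A'_def B'_def U2 h(3)[symmetric] using False by auto
        moreover have "card A' = card A - 1" using nin' fin' h(4) cA0 cardA2 lt0 unfolding A'_def by simp
        moreover have "card B' = card B + 1"
        proof -
          have "card (B0' - {c}) = card B0' - 1" using cnB fin' by simp
          then show ?thesis using nin' a12ne fin' h(5) cB0 cardB1 unfolding B'_def by simp
        qed
        ultimately show ?thesis by blast
      qed
    qed
  qed
qed


lemma swap_gen:
  assumes finA: "finite A" and finB: "finite B" and pdA: "pd A" and pdB: "pd B"
    and c2: "\<forall>e\<in>A\<union>B. card e = 2" and lt: "card B < card A"
  shows "\<exists>A' B'. pd A' \<and> pd B' \<and> A' \<union> B' = A \<union> B \<and> card A' = card A - 1 \<and> card B' = card B + 1"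
proof -
  define C where "C = A \<inter> B"
  define A1 where "A1 = A - C"
  define B1 where "B1 = B - C"
  have finC: "finite C" using finA unfolding C_def by simp
  have cA1: "card A1 = card A - card C" unfolding A1_def C_def using finA by (simp add: card_Diff_subset)
  have cB1: "card B1 = card B - card C" unfolding B1_def C_def using finB by (simp add: card_Diff_subset)
  have CA: "card C \<le> card A" "card C \<le> card B" unfolding C_def using finA finB
    by (simp_all add: card_mono)
  have "\<exists>A' B'. pd A' \<and> pd B' \<and> A' \<union> B' = A1 \<union> B1 \<and> card A' = card A1 - 1 \<and> card B' = card B1 + 1"
  proof (rule swap_disj)
    show "finite A1" "finite B1" using finA finB unfolding A1_def B1_def by auto
    show "A1 \<inter> B1 = {}" unfolding A1_def B1_def C_def by blast
    show "pd A1" using pdA unfolding A1_def pd_def by blast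
    show "pd B1" using pdB unfolding B1_def pd_def by blast
    show "\<forall>e\<in>A1 \<union> B1. card e = 2" using c2 unfolding A1_def B1_def by blast
    show "card B1 < card A1" using cA1 cB1 CA lt by linarith
  qed
  then obtain A1' B1' where h: "pd A1'" "pd B1'" "A1' \<union> B1' = A1 \<union> B1"
    "card A1' = card A1 - 1" "card B1' = card B1 + 1" by blast
  have dC: "\<And>e c. e \<in> A1 \<union> B1 \<Longrightarrow> c \<in> C \<Longrightarrow> e \<inter> c = {} \<and> c \<inter> e = {}"
  proof -
    fix e c assume e: "e \<in> A1 \<union> B1" and c: "c \<in> C"
    have "e \<noteq> c" using e c unfolding A1_def B1_def by blast
    then have "e \<inter> c = {}" using e c pdA pdB unfolding A1_def B1_def C_def pd_def by blast
    then show "e \<inter> c = {} \<and> c \<inter> e = {}" by blast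
  qed
  have pdC: "pd C" using pdA unfolding C_def pd_def by blast
  have pdU: "pd (P \<union> C)" if "pd P" "P \<subseteq> A1 \<union> B1" for P
    unfolding pd_def
  proof (intro ballI impI)
    fix e1 e2 assume e: "e1 \<in> P \<union> C" "e2 \<in> P \<union> C" "e1 \<noteq> e2"
    show "e1 \<inter> e2 = {}"
      using e that pdC dC unfolding pd_def by (metis UnE subsetD)
  qed
  have finAB: "finite (A1 \<union> B1)" using finA finB unfolding A1_def B1_def by auto
  have sub: "A1' \<subseteq> A1 \<union> B1" "B1' \<subseteq> A1 \<union> B1" using h(3) by blast+
  have fin': "finite A1'" "finite B1'" using sub finAB finite_subset by blast+
  have dis: "A1' \<inter> C = {}" "B1' \<inter> C = {}" using sub unfolding A1_def B1_def by blast+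
  have "pd (A1' \<union> C)" using pdU h(1) sub(1) by blast
  moreover have "pd (B1' \<union> C)" using pdU h(2) sub(2) by blast
  moreover have "(A1' \<union> C) \<union> (B1' \<union> C) = A \<union> B" using h(3) unfolding A1_def B1_def C_def by blast
  moreover have "card (A1' \<union> C) = card A - 1"
    using card_Un_disjoint[OF fin'(1) finC dis(1)] h(4) cA1 cB1 CA lt by linarith
  moreover have "card (B1' \<union> C) = card B + 1"
    using card_Un_disjoint[OF fin'(2) finC dis(2)] h(5) cA1 cB1 CA lt by linarith
  ultimately show ?thesis by blast
qed

lemma matching_pd: "matching E M \<Longrightarrow> pd M"
  unfolding matching_def pd_def by blast

lemma matching_card_le:
  assumes "simple_graph V E" "card V = 2 * n" "matching E M"
  shows "card M \<le> n"
proof -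
  have finV: "finite V" using assms(1) unfolding simple_graph_def by blast
  have ME: "M \<subseteq> E" using assms(3) unfolding matching_def by blast
  have EP: "E \<subseteq> Pow V" using assms(1) unfolding simple_graph_def by blast
  have finM: "finite M" using ME EP finV by (meson finite_Pow_iff finite_subset)
  have c2: "\<forall>e\<in>M. card e = 2" using ME assms(1) unfolding simple_graph_def by blast
  have pw: "pairwise disjnt M" using assms(3) unfolding matching_def pairwise_def disjnt_def by blast
  have fe: "\<And>e. e \<in> M \<Longrightarrow> finite e" using c2 by (metis card.infinite zero_neq_numeral)
  have "card (\<Union>M) = sum card M" using card_Union_disjoint[OF pw fe] by blast
  also have "\<dots> = 2 * card M" using c2 by simp
  finally have "card (\<Union>M) = 2 * card M" .
  moreover have "\<Union>M \<subseteq> V" using ME EP by blast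
  ultimately have "2 * card M \<le> card V" using finV card_mono by metis
  then show ?thesis using assms(2) by simp
qed

lemma main_ind:
  assumes sg: "simple_graph V E" and cV: "card V = 2 * n"
  shows "(\<forall>i<t. matching E (M i)) \<Longrightarrow> (\<Union>i<t. M i) = E \<Longrightarrow> (\<Sum>i<t. card (M i)) = (n - 1) * t
    \<Longrightarrow> \<exists>N :: nat \<Rightarrow> 'a set set. (\<forall>i<t. matching E (N i) \<and> card (N i) = n - 1) \<and> (\<Union>i<t. N i) = E"
proof (induction "card {i. i < t \<and> n - 1 < card (M i)}" arbitrary: M rule: less_induct)
  case less
  note mat = less.prems(1) and un = less.prems(2) and sm = less.prems(3)
  have le: "\<And>i. i < t \<Longrightarrow> card (M i) \<le> n" using matching_card_le[OF sg cV] mat by blast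
  show ?case
  proof (cases "\<forall>i<t. card (M i) \<le> n - 1")
    case True
    have "\<forall>i<t. card (M i) = n - 1"
    proof (rule ccontr)
      assume "\<not> (\<forall>i<t. card (M i) = n - 1)"
      then obtain i where i: "i < t" "card (M i) < n - 1" using True le_neq_implies_less by blast
      have "(\<Sum>i<t. card (M i)) < (\<Sum>i<t. n - 1)"
        by (rule sum_strict_mono_ex1) (use True i in auto)
      then show False using sm by simp
    qed
    then show ?thesis using mat un by blast
  next
    case False
    then obtain i where i: "i < t" "n - 1 < card (M i)" by (meson not_le)
    have ci: "card (M i) = n" using le[OF i(1)] i(2) by linarith
    have "\<exists>j<t. card (M j) < n - 1"
    proof (rule ccontr)
      assume "\<not> (\<exists>j<t. card (M j) < n - 1)"
      then have ge: "\<forall>j\<in>{..<t}. n - 1 \<le> card (M j)" by auto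
      have "(\<Sum>j<t. n - 1) < (\<Sum>j<t. card (M j))"
        by (rule sum_strict_mono_ex1) (use ge i in auto)
      then show False using sm by simp
    qed
    then obtain j where j: "j < t" "card (M j) < n - 1" by blast
    have ij: "i \<noteq> j" using i j by auto
    have MiE: "M i \<subseteq> E" "M j \<subseteq> E" using mat i j unfolding matching_def by blast+
    have finE: "finite E" using sg unfolding simple_graph_def
      by (meson finite_Pow_iff finite_subset subsetI PowI)
    have "\<exists>A' B'. pd A' \<and> pd B' \<and> A' \<union> B' = M i \<union> M j \<and> card A' = card (M i) - 1 \<and> card B' = card (M j) + 1"
    proof (rule swap_gen)
      show "finite (M i)" "finite (M j)" using MiE finE finite_subset by blast+
      show "pd (M i)" "pd (M j)" using mat i j matching_pd by blast+
      show "\<forall>e\<in>M i \<union> M j. card e = 2" using MiE sg unfolding simple_graph_def by blast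
      show "card (M j) < card (M i)" using ci j by linarith
    qed
    then obtain A' B' where h: "pd A'" "pd B'" "A' \<union> B' = M i \<union> M j"
      "card A' = card (M i) - 1" "card B' = card (M j) + 1" by blast
    define M' where "M' = M(i := A', j := B')"
    have M'i: "M' i = A'" "M' j = B'" using ij unfolding M'_def by auto
    have M'o: "\<And>l. l \<noteq> i \<Longrightarrow> l \<noteq> j \<Longrightarrow> M' l = M l" unfolding M'_def by auto
    have mat': "\<forall>l<t. matching E (M' l)"
    proof (intro allI impI)
      fix l assume l: "l < t"
      show "matching E (M' l)"
      proof (cases "l = i \<or> l = j")
        case True
        have "A' \<subseteq> E" "B' \<subseteq> E" using h(3) MiE by blast+
        then show ?thesis using True M'i h(1,2) unfolding matching_def pd_def by auto
      next
        case False
        then show ?thesis using M'o mat l by auto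
      qed
    qed
    have un': "(\<Union>l<t. M' l) = E"
    proof -
      have "(\<Union>l<t. M' l) = (\<Union>l<t. M l)"
      proof
        show "(\<Union>l<t. M' l) \<subseteq> (\<Union>l<t. M l)"
        proof
          fix x assume "x \<in> (\<Union>l<t. M' l)"
          then obtain l where l: "l < t" "x \<in> M' l" by blast
          show "x \<in> (\<Union>l<t. M l)"
          proof (cases "l = i \<or> l = j")
            case True
            then have "x \<in> M i \<union> M j" using l M'i h(3) by auto
            then show ?thesis using i j by blast
          next
            case False
            then show ?thesis using l M'o by auto
          qed
        qed
        show "(\<Union>l<t. M l) \<subseteq> (\<Union>l<t. M' l)"
        proof
          fix x assume "x \<in> (\<Union>l<t. M l)"
          then obtain l where l: "l < t" "x \<in> M l" by blast
          show "x \<in> (\<Union>l<t. M' l)"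
          proof (cases "l = i \<or> l = j")
            case True
            then have "x \<in> M' i \<union> M' j" using l M'i h(3) by auto
            then show ?thesis using i j by blast
          next
            case False
            then show ?thesis using l M'o by (metis UN_iff lessThan_iff)
          qed
        qed
      qed
      then show ?thesis using un by simp
    qed
    have sm': "(\<Sum>l<t. card (M' l)) = (n - 1) * t"
    proof -
      have r: "\<And>f :: nat \<Rightarrow> nat. (\<Sum>l<t. f l) = f i + f j + (\<Sum>l\<in>{..<t} - {i} - {j}. f l)"
      proof -
        fix f :: "nat \<Rightarrow> nat"
        have "(\<Sum>l<t. f l) = f i + (\<Sum>l\<in>{..<t} - {i}. f l)" using i by (simp add: sum.remove)
        also have "(\<Sum>l\<in>{..<t} - {i}. f l) = f j + (\<Sum>l\<in>{..<t} - {i} - {j}. f l)"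
          using j ij by (simp add: sum.remove)
        finally show "(\<Sum>l<t. f l) = f i + f j + (\<Sum>l\<in>{..<t} - {i} - {j}. f l)" by simp
      qed
      have eq: "(\<Sum>l\<in>{..<t} - {i} - {j}. card (M' l)) = (\<Sum>l\<in>{..<t} - {i} - {j}. card (M l))"
        by (rule sum.cong) (auto simp: M'o)
      have "card (M' i) + card (M' j) = card (M i) + card (M j)" using M'i h(4,5) ci j by simp
      then show ?thesis using r[of "\<lambda>l. card (M' l)"] r[of "\<lambda>l. card (M l)"] eq sm by simp
    qed
    have set: "{l. l < t \<and> n - 1 < card (M' l)} = {l. l < t \<and> n - 1 < card (M l)} - {i}"
    proof -
      have "card (M' i) = n - 1" "card (M' j) \<le> n - 1" using M'i h(4,5) ci j by auto
      then show ?thesis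
      proof (intro set_eqI)
        fix l
        assume a: "card (M' i) = n - 1" "card (M' j) \<le> n - 1"
        show "l \<in> {l. l < t \<and> n - 1 < card (M' l)} \<longleftrightarrow> l \<in> {l. l < t \<and> n - 1 < card (M l)} - {i}"
        proof (cases "l = i \<or> l = j")
          case True
          then show ?thesis using a j by auto
        next
          case False
          then show ?thesis using M'o[of l] by auto
        qed
      qed
    qed
    have "card {l. l < t \<and> n - 1 < card (M' l)} < card {l. l < t \<and> n - 1 < card (M l)}"
      unfolding set by (rule card_Diff1_less) (use i in auto)
    then show ?thesis using less.hyps mat' un' sm' by blast
  qed
qed

theorem lemma1:
  fixes V :: "'a set" and E :: "'a set set" and M :: "nat \<Rightarrow> 'a set set" and n t :: nat
  assumes "cubic_graph V E"
    and "card V = 2 * n"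
    and "\<forall>i<t. matching E (M i)"
    and "(\<Union>i<t. M i) = E"
    and "(\<Sum>i<t. card (M i)) = (n - 1) * t"
  shows "\<exists>N :: nat \<Rightarrow> 'a set set. (\<forall>i<t. matching E (N i) \<and> card (N i) = n - 1) \<and> (\<Union>i<t. N i) = E"
  using main_ind[of V E n t M] assms unfolding cubic_graph_def by blast

end
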